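(* Let $S$ be the basic spinor representation of $Spin(3)$, realized as a $2$-dimensional irreducible left module over the complex Clifford algebra $\mathbb C_3$ (generated by $e_1,e_2,e_3$ with $e_je_l+e_le_j=-2\delta_{jl}$, $e_{ij}=e_ie_j$), and let $v^{+}\in S$ be nonzero with $-ie_{12}v^{+}=v^{+}$. Put $z=x_1+ix_2$, $\overline z=x_1-ix_2$, $\frac{\partial}{\partial z}=\frac12(\partial_{x_1}-i\partial_{x_2})$, $\frac{\partial}{\partial \overline z}=\frac12(\partial_{x_1}+i\partial_{x_2})$, $X^{-}=2x_3\frac{\partial}{\partial\overline z}- z\frac{\partial}{\partial x_3}$, $\omega^-=\frac12(-e_{31}+ie_{23})$ (acting by left multiplication on $S$-valued polynomials), and $\tilde X^-=X^-+\omega^-$. For $k\in\mathbb N_0$ let $f^k_0=\frac{1}{k!2^k}\overline z^k$, $f^k_j=(X^-)^jf^k_0$ for $0<j\le 2k$, $f^k_{-1}=f^k_{2k+1}=0$, and $F^k_0=\frac{1}{k!2^k}\overline z^kv^+$, $F^k_j=(\tilde X^-)^jF^k_0$ for $0<j\le 2k+1$, $F^k_{-1}=0$. Then: (a) As operators on $S$-valued polynomials, $(\tilde X^-)^j=(X^-)^j+j(X^-)^{j-1}\omega^-$ for all $j\in\mathbb N$. In particular, for $j=0,\dots,2k+1$, $F^k_j=f^k_jv^+ + j f^k_{j-1}\,\omega^-v^+$. (b) $\big[\frac{\partial}{\partial x_3},(\tilde X^-)^j\big]=2j(\tilde X^-)^{j-1}\frac{\partial}{\partial\overline z}$ for all $j\in\mathbb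 N$. In particular, for each $k\in\mathbb N$, $$\frac{\partial F^k_j}{\partial x_3}=\begin{cases} j\,F^{k-1}_{j-1}, & j=1,\dots,2k,\\ 0, & j=0,\,2k+1.\end{cases}$$ (c) $[x_3,(\tilde X^-)^j]=j(\tilde X^-)^{j-1}z$ for all $j\in\mathbb N$ (where $x_3$ and $z$ act by multiplication). In particular, for each $k\in\mathbb N_0$ and $j=0,1,\dots,2k+1$, $$F^{k+1}_{j+1}=x_3F^k_j-jzF^k_{j-1}+\omega^-F^{k+1}_j.$$
   Context: Here $[A,B]=AB-BA$. The polynomials $f^k_j$ ($j=0,\dots,2k$) form the canonical weight basis of the space of complex $k$-homogeneous harmonic polynomials on $\mathbb R^3$, and $F^k_j$ ($j=0,\dots,2k+1$) form the canonical weight basis of the space of $S$-valued $k$-homogeneous polynomials $P$ with $(e_1\partial_{x_1}+e_2\partial_{x_2}+e_3\partial_{x_3})P=0$. *)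

theory Defs
  imports "HOL-Analysis.Analysis" "HOL-Library.Function_Algebras"
begin

text \<open>Polynomials on R^3 with complex coefficients are represented by their
coefficient functions on exponent triples (a,b,c) (monomial x1^a x2^b x3^c).\<close>

type_synonym mono = "nat \<times> nat \<times> nat"
type_synonym spinor = "complex ^ 2"
type_synonym cliff = "complex ^ 2 ^ 2"
type_synonym poly = "mono \<Rightarrow> complex"
type_synonym spoly = "mono \<Rightarrow> spinor"

definition dx1 :: "poly \<Rightarrow> poly" where
  "dx1 p = (\<lambda>(a,b,c). of_nat (a+1) * p (a+1,b,c))"
definition dx2 :: "poly \<Rightarrow> poly" where
  "dx2 p = (\<lambda>(a,b,c). of_nat (b+1) * p (a,b+1,c))"
definition dx3 :: "poly \<Rightarrow> poly" where
  "dx3 p = (\<lambda>(a,b,c). of_nat (c+1) * p (a,b,c+1))"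

definition mx1 :: "poly \<Rightarrow> poly" where
  "mx1 p = (\<lambda>(a,b,c). if a = 0 then 0 else p (a-1,b,c))"
definition mx2 :: "poly \<Rightarrow> poly" where
  "mx2 p = (\<lambda>(a,b,c). if b = 0 then 0 else p (a,b-1,c))"
definition mx3 :: "poly \<Rightarrow> poly" where
  "mx3 p = (\<lambda>(a,b,c). if c = 0 then 0 else p (a,b,c-1))"

definition dzb :: "poly \<Rightarrow> poly" where
  "dzb p = (\<lambda>m. (dx1 p m + \<i> * dx2 p m) / 2)"
definition mz :: "poly \<Rightarrow> poly" where
  "mz p = (\<lambda>m. mx1 p m + \<i> * mx2 p m)"
definition mzb :: "poly \<Rightarrow> poly" where
  "mzb p = (\<lambda>m. mx1 p m - \<i> * mx2 p m)"

definition Xm :: "poly \<Rightarrow> poly" where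
  "Xm p = (\<lambda>m. 2 * mx3 (dzb p) m - mz (dx3 p) m)"

definition pone :: poly where
  "pone = (\<lambda>m. if m = (0,0,0) then 1 else 0)"

definition f0 :: "nat \<Rightarrow> poly" where
  "f0 k = (\<lambda>m. (1 / (fact k * 2 ^ k)) * (mzb ^^ k) pone m)"

definition f :: "nat \<Rightarrow> nat \<Rightarrow> poly" where
  "f k j = (if j \<le> 2 * k then (Xm ^^ j) (f0 k) else (\<lambda>_. 0))"

definition lift :: "(poly \<Rightarrow> poly) \<Rightarrow> spoly \<Rightarrow> spoly" where
  "lift T P = (\<lambda>m. \<chi> i. T (\<lambda>m'. P m' $ i) m)"

definition cl :: "(spinor \<Rightarrow> spinor) \<Rightarrow> spoly \<Rightarrow> spoly" where
  "cl A P = (\<lambda>m. A (P m))"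

definition csm :: "complex \<Rightarrow> spoly \<Rightarrow> spoly" where
  "csm c P = (\<lambda>m. c *s P m)"

definition pv :: "poly \<Rightarrow> spinor \<Rightarrow> spoly" where
  "pv p v = (\<lambda>m. p m *s v)"

definition clifford_gens :: "(nat \<Rightarrow> cliff) \<Rightarrow> bool" where
  "clifford_gens e \<longleftrightarrow> (\<forall>j\<in>{1,2,3}. \<forall>l\<in>{1,2,3}.
      e j ** e l + e l ** e j = (if j = l then mat (-2) else 0))"

definition omega :: "(nat \<Rightarrow> cliff) \<Rightarrow> spinor \<Rightarrow> spinor" where
  "omega e v = (1/2) *s (- ((e 3 ** e 1) *v v) + \<i> *s ((e 2 ** e 3) *v v))"

definition Xt :: "(nat \<Rightarrow> cliff) \<Rightarrow> spoly \<Rightarrow> spoly" where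
  "Xt e P = (\<lambda>m. lift Xm P m + omega e (P m))"

definition F0 :: "nat \<Rightarrow> spinor \<Rightarrow> spoly" where
  "F0 k v = pv (f0 k) v"

definition F :: "(nat \<Rightarrow> cliff) \<Rightarrow> spinor \<Rightarrow> nat \<Rightarrow> nat \<Rightarrow> spoly" where
  "F e v k j = (if j \<le> 2 * k + 1 then (Xt e ^^ j) (F0 k v) else (\<lambda>_. 0))"

definition is_spoly :: "spoly \<Rightarrow> bool" where
  "is_spoly P \<longleftrightarrow> finite {m. P m \<noteq> 0}"

end

theory Submission
  imports Defs
begin


lemma C1: "Xm (mz p) = mz (Xm p)"
  unfolding Xm_def mz_def mx1_def mx2_def mx3_def dzb_def dx1_def dx2_def dx3_def
  apply (rule ext) apply (clarsimp split: prod.splits)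
  by (auto simp: field_simps)

lemma C2: "Xm (mx3 p) = (\<lambda>m. mx3 (Xm p) m - mz p m)"
  unfolding Xm_def mz_def mx1_def mx2_def mx3_def dzb_def dx1_def dx2_def dx3_def
  apply (rule ext) apply (clarsimp split: prod.splits)
  by (auto simp: field_simps)

lemma C3: "Xm (mzb p) = (\<lambda>m. mzb (Xm p) m + 2 * mx3 p m)"
  unfolding Xm_def mz_def mzb_def mx1_def mx2_def mx3_def dzb_def dx1_def dx2_def dx3_def
  apply (rule ext) apply (clarsimp split: prod.splits)
  by (auto simp: field_simps)

lemma C4: "dx3 (Xm p) = (\<lambda>m. Xm (dx3 p) m + 2 * dzb p m)"
  unfolding Xm_def mz_def mzb_def mx1_def mx2_def mx3_def dzb_def dx1_def dx2_def dx3_def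
  apply (rule ext) apply (clarsimp split: prod.splits)
  by (auto simp: field_simps)

lemma C5: "dzb (Xm p) = Xm (dzb p)"
  unfolding Xm_def mz_def mzb_def mx1_def mx2_def mx3_def dzb_def dx1_def dx2_def dx3_def
  apply (rule ext) apply (clarsimp split: prod.splits)
  by (auto simp: field_simps)

lemma C6: "dx3 (mzb p) = mzb (dx3 p)"
  unfolding Xm_def mz_def mzb_def mx1_def mx2_def mx3_def dzb_def dx1_def dx2_def dx3_def
  apply (rule ext) apply (clarsimp split: prod.splits)
  by (auto simp: field_simps)

lemma C7: "dzb (mzb p) = (\<lambda>m. mzb (dzb p) m + p m)"
  unfolding Xm_def mz_def mzb_def mx1_def mx2_def mx3_def dzb_def dx1_def dx2_def dx3_def
  apply (rule ext) apply (clarsimp split: prod.splits)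
  by (auto simp: field_simps)

lemma C8: "mx3 (Xm p) = (\<lambda>m. Xm (mx3 p) m + mz p m)"
  using C2[of p] by (auto simp: fun_eq_iff)

lemma C9: "dzb (mz p) = mz (dzb p)"
  unfolding Xm_def mz_def mzb_def mx1_def mx2_def mx3_def dzb_def dx1_def dx2_def dx3_def
  apply (rule ext) apply (clarsimp split: prod.splits)
  by (auto simp: field_simps)

lemma P1: "dx3 pone = (\<lambda>_. 0)" "dzb pone = (\<lambda>_. 0)" "Xm pone = (\<lambda>_. 0)"
  unfolding Xm_def pone_def mz_def mzb_def mx1_def mx2_def mx3_def dzb_def dx1_def dx2_def dx3_def
  by (auto simp: fun_eq_iff)



definition plin :: "(poly \<Rightarrow> poly) \<Rightarrow> bool" where
  "plin T \<longleftrightarrow> (\<forall>p q. T (\<lambda>m. p m + q m) = (\<lambda>m. T p m + T q m)) \<and>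
               (\<forall>c p. T (\<lambda>m. c * p m) = (\<lambda>m. c * T p m))"

lemma plinD:
  assumes "plin T"
  shows "T (\<lambda>m. p m + q m) = (\<lambda>m. T p m + T q m)"
    "T (\<lambda>m. c * p m) = (\<lambda>m. c * T p m)"
  using assms unfolding plin_def by blast+

lemma plin_zero: assumes "plin T" shows "T (\<lambda>_. 0) = (\<lambda>_. 0)"
  using plinD(2)[OF assms, of 0 "\<lambda>_. 0"] by simp

lemma plin_multr: assumes "plin T" shows "T (\<lambda>m. p m * c) = (\<lambda>m. T p m * c)"
  using plinD(2)[OF assms, of c p] by (simp add: mult.commute)

lemma plin_diff: assumes "plin T" shows "T (\<lambda>m. p m - q m) = (\<lambda>m. T p m - T q m)"
proof -
  have "(\<lambda>m. p m - q m) = (\<lambda>m. p m + (\<lambda>m. (-1) * q m) m)" by simp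
  then show ?thesis using plinD(1)[OF assms, of p "\<lambda>m. (-1) * q m"] plinD(2)[OF assms, of "-1" q] by simp
qed

lemma plin_sum: assumes "plin T" "finite S"
  shows "T (\<lambda>m. \<Sum>j\<in>S. g j m) = (\<lambda>m. \<Sum>j\<in>S. T (g j) m)"
  using assms(2)
proof (induction S rule: finite_induct)
  case empty then show ?case using plin_zero[OF assms(1)] by simp
next
  case (insert x F)
  then show ?case using plinD(1)[OF assms(1), of "g x" "\<lambda>m. \<Sum>j\<in>F. g j m"] by simp
qed

lemma plin_comp: "plin T \<Longrightarrow> plin S \<Longrightarrow> plin (\<lambda>p. T (S p))"
  unfolding plin_def by simp

lemma plin_id: "plin (\<lambda>p. p)" unfolding plin_def by simp

lemma plin_funpow: "plin T \<Longrightarrow> plin (T ^^ n)"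
  by (induction n) (auto simp: plin_def)

lemma plin_ops: "plin dx1" "plin dx2" "plin dx3" "plin mx1" "plin mx2" "plin mx3"
  unfolding plin_def dx1_def dx2_def dx3_def mx1_def mx2_def mx3_def
  by (auto simp: fun_eq_iff algebra_simps)

lemma plin_ops2: "plin dzb" "plin mz" "plin mzb" "plin Xm"
  unfolding plin_def Xm_def dzb_def mz_def mzb_def dx1_def dx2_def dx3_def mx1_def mx2_def mx3_def
  by (auto simp: fun_eq_iff field_simps)



definition clin :: "(spinor \<Rightarrow> spinor) \<Rightarrow> bool" where
  "clin A \<longleftrightarrow> (\<forall>x y. A (x + y) = A x + A y) \<and> (\<forall>c x. A (c *s x) = c *s A x)"

lemma clin_expand:
  assumes "clin A"
  shows "A x $ i = (\<Sum>j\<in>UNIV. x $ j * A (axis j 1) $ i)"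
proof -
  have add: "A (x + y) = A x + A y" and sm: "A (c *s x) = c *s A x" for x y c
    using assms unfolding clin_def by blast+
  have z: "A 0 = 0" using sm[of 0 0] by simp
  have ex: "A (\<Sum>j\<in>S. x$j *s axis j 1) = (\<Sum>j\<in>S. x$j *s A (axis j 1))" if "finite S" for S
    using that
  proof (induction S rule: finite_induct)
    case empty
    then show ?case using z by simp
  next
    case (insert a F)
    have "A (\<Sum>j\<in>insert a F. x$j *s axis j 1) = A (x$a *s axis a 1 + (\<Sum>j\<in>F. x$j *s axis j 1))"
      by (simp only: sum.insert[OF insert(1,2)])
    also have "\<dots> = x$a *s A (axis a 1) + (\<Sum>j\<in>F. x$j *s A (axis j 1))"
      by (simp only: add sm insert(3))
    also have "\<dots> = (\<Sum>j\<in>insert a F. x$j *s A (axis j 1))"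
      by (simp only: sum.insert[OF insert(1,2)])
    finally show ?case .
  qed
  have "A x = A (\<Sum>j\<in>UNIV. x$j *s axis j 1)" by (simp only: basis_expansion)
  also have "\<dots> = (\<Sum>j\<in>UNIV. x$j *s A (axis j 1))" by (rule ex) simp
  finally have "A x = (\<Sum>j\<in>UNIV. x$j *s A (axis j 1))" .
  then show ?thesis by (simp add: sum_component)
qed

lemma lift_add: assumes "plin T" shows "lift T (P + Q) = lift T P + lift T Q"
proof -
  have "T (\<lambda>m'. P m' $ i + Q m' $ i) = (\<lambda>m. T (\<lambda>m'. P m' $ i) m + T (\<lambda>m'. Q m' $ i) m)" for i
    by (rule plinD(1)[OF assms])
  then show ?thesis by (simp add: lift_def fun_eq_iff vec_eq_iff)
qed

lemma lift_csm: assumes "plin T" shows "lift T (csm c P) = csm c (lift T P)"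
proof -
  have "T (\<lambda>m'. c * P m' $ i) = (\<lambda>m. c * T (\<lambda>m'. P m' $ i) m)" for i
    by (rule plinD(2)[OF assms])
  then show ?thesis by (simp add: lift_def csm_def fun_eq_iff vec_eq_iff)
qed

lemma lift_pv: "plin T \<Longrightarrow> lift T (pv p v) = pv (T p) v"
  by (simp add: lift_def pv_def plin_multr fun_eq_iff vec_eq_iff)

lemma lift_lift: "lift T (lift S P) = lift (\<lambda>p. T (S p)) P"
  by (simp add: lift_def)

lemma lift_id: "lift (\<lambda>p. p) P = P"
  by (simp add: lift_def)

lemma lift_funpow: "(lift T ^^ n) P = lift (T ^^ n) P"
proof (induction n arbitrary: P)
  case 0 show ?case using lift_id[of P] by (simp add: id_def)
next
  case (Suc n) show ?case by (simp add: Suc lift_lift)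
qed

lemma lift_cl: assumes "plin T" "clin A" shows "lift T (cl A P) = cl A (lift T P)"
proof -
  have "lift T (cl A P) m $ i = cl A (lift T P) m $ i" for m i
  proof -
    have e1: "(\<lambda>m'. A (P m') $ i) = (\<lambda>m'. \<Sum>j\<in>UNIV. P m' $ j * A (axis j 1) $ i)"
      by (rule ext, rule clin_expand[OF assms(2)])
    have "lift T (cl A P) m $ i = T (\<lambda>m'. A (P m') $ i) m"
      by (simp add: lift_def cl_def)
    also have "\<dots> = T (\<lambda>m'. \<Sum>j\<in>UNIV. P m' $ j * A (axis j 1) $ i) m"
      by (simp only: e1)
    also have "\<dots> = (\<Sum>j\<in>UNIV. T (\<lambda>m'. P m' $ j * A (axis j 1) $ i) m)"
      by (simp only: plin_sum[OF assms(1) finite_class.finite_UNIV])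
    also have "\<dots> = (\<Sum>j\<in>UNIV. T (\<lambda>m'. P m' $ j) m * A (axis j 1) $ i)"
      by (simp only: plin_multr[OF assms(1)])
    also have "\<dots> = (\<Sum>j\<in>UNIV. lift T P m $ j * A (axis j 1) $ i)"
      by (simp add: lift_def)
    also have "\<dots> = A (lift T P m) $ i"
      by (rule clin_expand[OF assms(2), symmetric])
    also have "\<dots> = cl A (lift T P) m $ i"
      by (simp add: cl_def)
    finally show ?thesis .
  qed
  then show ?thesis by (simp add: fun_eq_iff vec_eq_iff)
qed

lemma lift_comb: "lift (\<lambda>p m. S p m + c * R p m) P = lift S P + csm c (lift R P)"
  by (simp add: lift_def csm_def fun_eq_iff vec_eq_iff)

lemma lift_comb1: "lift (\<lambda>p m. S p m + R p m) P = lift S P + lift R P"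
  by (simp add: lift_def fun_eq_iff vec_eq_iff)

lemma cl_add: "clin A \<Longrightarrow> cl A (P + Q) = cl A P + cl A Q"
  by (simp add: cl_def clin_def fun_eq_iff)

lemma cl_csm: "clin A \<Longrightarrow> cl A (csm c P) = csm c (cl A P)"
  by (simp add: cl_def clin_def csm_def fun_eq_iff)

lemma cl_pv: "clin A \<Longrightarrow> cl A (pv p v) = pv p (A v)"
  by (simp add: cl_def clin_def pv_def fun_eq_iff)

lemma mat_mult_vec: "(mat c :: cliff) *v x = c *s x"
  by (simp add: vec_eq_iff matrix_vector_mult_def mat_def if_distrib if_distribR sum.delta' cong del: if_weak_cong)

lemma mv_lin: "(A::cliff) *v (x + y) = A *v x + A *v y" "A *v (- x) = - (A *v x)"
  "A *v (c *s x) = c *s (A *v x)" "A *v (x - y) = A *v x - A *v y"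
  by (simp_all add: vec_eq_iff matrix_vector_mult_def algebra_simps sum.distrib sum_negf sum_subtractf sum_distrib_left)

lemma clin_omega: "clin (omega e)"
  unfolding clin_def omega_def
  by (simp add: mv_lin vec_eq_iff algebra_simps)


lemma vid: "(1/2::complex) *s (-(1/2 *s (x + \<i> *s (- y))) + \<i> *s (1/2 *s (- y + \<i> *s (- x)))) = (0::complex^2)"
  by (simp add: vec_eq_iff algebra_simps)

lemma omega_sq:
  assumes "clifford_gens e"
  shows "omega e (omega e x) = 0"
proof -
  have rel: "e j *v (e l *v y) + e l *v (e j *v y) = (if j = l then (-2) *s y else 0)"
    if "j \<in> {1,2,3}" "l \<in> {1,2,3}" for j l y
  proof -
    have "e j *v (e l *v y) + e l *v (e j *v y) = (e j ** e l + e l ** e j) *v y"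
      by (simp add: matrix_vector_mul_assoc matrix_vector_mult_add_rdistrib)
    also have "\<dots> = (if j = l then (-2) *s y else 0)"
      using assms that unfolding clifford_gens_def by (auto simp: mat_mult_vec)
    finally show ?thesis .
  qed
  have r11: "e 1 *v (e 1 *v y) = - y" for y using rel[of 1 1 y] by (simp add: vec_eq_iff)
  have r22: "e 2 *v (e 2 *v y) = - y" for y using rel[of 2 2 y] by (simp add: vec_eq_iff)
  have r33: "e 3 *v (e 3 *v y) = - y" for y using rel[of 3 3 y] by (simp add: vec_eq_iff)
  have r21: "e 2 *v (e 1 *v y) = - (e 1 *v (e 2 *v y))" for y
    using rel[of 2 1 y] by (simp add: eq_neg_iff_add_eq_0 add.commute)
  have r31: "e 3 *v (e 1 *v y) = - (e 1 *v (e 3 *v y))" for y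
    using rel[of 3 1 y] by (simp add: eq_neg_iff_add_eq_0 add.commute)
  have r32: "e 3 *v (e 2 *v y) = - (e 2 *v (e 3 *v y))" for y
    using rel[of 3 2 y] by (simp add: eq_neg_iff_add_eq_0 add.commute)
  have r13: "e 1 *v (e 3 *v y) = - (e 3 *v (e 1 *v y))" for y
    using rel[of 1 3 y] by (simp add: eq_neg_iff_add_eq_0)
  have aa: "e 3 *v (e 1 *v (e 3 *v (e 1 *v x))) = - x"
  proof -
    have "e 1 *v (e 3 *v (e 1 *v x)) = - (e 3 *v (e 1 *v (e 1 *v x)))" by (rule r13)
    also have "\<dots> = e 3 *v x" by (simp only: r11 mv_lin(2) minus_minus)
    finally show ?thesis by (simp add: r33)
  qed
  have bb: "e 2 *v (e 3 *v (e 2 *v (e 3 *v x))) = - x"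
    by (simp only: r32 r22 r33 mv_lin(2) minus_minus)
  have ab: "e 3 *v (e 1 *v (e 2 *v (e 3 *v x))) = - (e 1 *v (e 2 *v x))"
  proof -
    have "e 3 *v (e 2 *v (e 3 *v x)) = e 2 *v x"
      by (simp only: r32 r33 mv_lin(2) minus_minus)
    then show ?thesis by (simp only: r31)
  qed
  have ba: "e 2 *v (e 3 *v (e 3 *v (e 1 *v x))) = e 1 *v (e 2 *v x)"
    by (simp only: r21 r33 mv_lin(2) minus_minus)
  have AA: "(e 3 ** e 1) *v ((e 3 ** e 1) *v x) = - x"
    by (simp only: matrix_vector_mul_assoc[symmetric] aa)
  have AB: "(e 3 ** e 1) *v ((e 2 ** e 3) *v x) = - (e 1 *v (e 2 *v x))"
    by (simp only: matrix_vector_mul_assoc[symmetric] ab)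
  have BA: "(e 2 ** e 3) *v ((e 3 ** e 1) *v x) = e 1 *v (e 2 *v x)"
    by (simp only: matrix_vector_mul_assoc[symmetric] ba)
  have BB: "(e 2 ** e 3) *v ((e 2 ** e 3) *v x) = - x"
    by (simp only: matrix_vector_mul_assoc[symmetric] bb)
  have OA: "(e 3 ** e 1) *v omega e x = (1/2) *s (x + \<i> *s (- (e 1 *v (e 2 *v x))))"
    unfolding omega_def by (simp only: mv_lin AA AB minus_minus)
  have OB: "(e 2 ** e 3) *v omega e x = (1/2) *s (- (e 1 *v (e 2 *v x)) + \<i> *s (- x))"
    unfolding omega_def by (simp only: mv_lin BA BB)
  have "omega e (omega e x) = (1/2) *s (- ((e 3 ** e 1) *v omega e x) + \<i> *s ((e 2 ** e 3) *v omega e x))"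
    by (rule omega_def)
  also have "\<dots> = 0" unfolding OA OB by (rule vid)
  finally show ?thesis .
qed



definition VV :: "nat \<Rightarrow> poly \<Rightarrow> bool" where
  "VV N g \<longleftrightarrow> (\<forall>n\<ge>N. (Xm ^^ n) g = (\<lambda>_. 0))"

lemma Xm_pow_zero: "(Xm ^^ n) (\<lambda>_. 0) = (\<lambda>_. 0)"
  using plin_zero[OF plin_funpow[OF plin_ops2(4)]] .

lemma Xm_pow_mz: "(Xm ^^ n) (mz g) = mz ((Xm ^^ n) g)"
  by (induction n) (auto simp: C1)

lemma VV_0: "VV 0 g \<Longrightarrow> g = (\<lambda>_. 0)"
  unfolding VV_def by (metis funpow_0 le0)

lemma VV_Suc: "VV (Suc N) g \<Longrightarrow> VV N (Xm g)"
  unfolding VV_def by (metis Suc_le_mono funpow_Suc_right o_apply)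

lemma VV_SucI: "VV N (Xm g) \<Longrightarrow> VV (Suc N) g"
  unfolding VV_def by (metis Suc_le_D Suc_le_mono funpow_Suc_right o_apply)

lemma VV_mz: "VV N g \<Longrightarrow> VV N (mz g)"
  unfolding VV_def using Xm_pow_mz plin_zero[OF plin_ops2(2)] by simp

lemma VV_add: "VV N g \<Longrightarrow> VV N h \<Longrightarrow> VV N (\<lambda>m. g m + c * h m)"
  unfolding VV_def using plinD[OF plin_funpow[OF plin_ops2(4)]] by simp

lemma VV_diff: "VV N g \<Longrightarrow> VV N h \<Longrightarrow> VV N (\<lambda>m. g m - h m)"
  unfolding VV_def using plin_diff[OF plin_funpow[OF plin_ops2(4)]] by simp

lemma VV_mx3: "VV N g \<Longrightarrow> VV (Suc N) (mx3 g)"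
proof (induction N arbitrary: g)
  case 0
  then have "g = (\<lambda>_. 0)" by (rule VV_0)
  then show ?case unfolding VV_def using plin_zero[OF plin_ops(6)] Xm_pow_zero by simp
next
  case (Suc N)
  have "VV (Suc N) (mx3 (Xm g))" using Suc.IH[OF VV_Suc[OF Suc.prems]] .
  moreover have "VV (Suc N) (mz g)" using VV_mz[OF Suc.prems] .
  ultimately have "VV (Suc N) (Xm (mx3 g))" unfolding C2 by (rule VV_diff)
  then show ?case by (rule VV_SucI)
qed

lemma VV_mzb: "VV N g \<Longrightarrow> VV (Suc (Suc N)) (mzb g)"
proof (induction N arbitrary: g)
  case 0
  then have "g = (\<lambda>_. 0)" by (rule VV_0)
  then show ?case unfolding VV_def using plin_zero[OF plin_ops2(3)] Xm_pow_zero by simp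
next
  case (Suc N)
  have "VV (Suc (Suc N)) (mzb (Xm g))" using Suc.IH[OF VV_Suc[OF Suc.prems]] .
  moreover have "VV (Suc (Suc N)) (mx3 g)" using VV_mx3[OF Suc.prems] .
  ultimately have "VV (Suc (Suc N)) (Xm (mzb g))" unfolding C3 by (rule VV_add)
  then show ?case by (rule VV_SucI)
qed

lemma VV_pone: "VV 1 pone"
proof -
  have "VV 0 (Xm pone)" by (simp add: VV_def P1 Xm_pow_zero)
  then have "VV (Suc 0) pone" by (rule VV_SucI)
  then show ?thesis by simp
qed

lemma VV_mzb_pow: "VV (2 * k + 1) ((mzb ^^ k) pone)"
proof (induction k)
  case 0 then show ?case using VV_pone by simp
next
  case (Suc k)
  then show ?case using VV_mzb[OF Suc.IH] by simp
qed

lemma f0_eq: "f0 k = (\<lambda>m. (1 / (fact k * 2 ^ k)) * (mzb ^^ k) pone m)"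
  by (simp add: f0_def)

lemma VV_f0: "VV (2 * k + 1) (f0 k)"
  unfolding VV_def
proof (intro allI impI)
  fix n assume n: "n \<ge> 2 * k + 1"
  have "(Xm ^^ n) (f0 k) = (\<lambda>m. (1 / (fact k * 2 ^ k)) * (Xm ^^ n) ((mzb ^^ k) pone) m)"
    by (simp only: f0_eq plinD(2)[OF plin_funpow[OF plin_ops2(4)]])
  also have "\<dots> = (\<lambda>_. 0)" using VV_mzb_pow[of k] n unfolding VV_def by simp
  finally show "(Xm ^^ n) (f0 k) = (\<lambda>_. 0)" .
qed

lemma Xm_f0_vanish: "n \<ge> 2 * k + 1 \<Longrightarrow> (Xm ^^ n) (f0 k) = (\<lambda>_. 0)"
  using VV_f0 unfolding VV_def by blast

lemma f_eq: "j \<le> 2 * k + 1 \<Longrightarrow> f k j = (Xm ^^ j) (f0 k)"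
  unfolding f_def using Xm_f0_vanish[of k j] by auto

lemma dx3_mzb_pow: "dx3 ((mzb ^^ k) pone) = (\<lambda>_. 0)"
  by (induction k) (auto simp: P1 C6 plin_zero[OF plin_ops2(3)])

lemma dzb_mzb_pow: "dzb ((mzb ^^ Suc k) pone) = (\<lambda>m. of_nat (Suc k) * (mzb ^^ k) pone m)"
proof (induction k)
  case 0 then show ?case by (simp add: C7 P1 plin_zero[OF plin_ops2(3)])
next
  case (Suc k)
  have "dzb ((mzb ^^ Suc (Suc k)) pone) = dzb (mzb ((mzb ^^ Suc k) pone))" by simp
  also have "\<dots> = (\<lambda>m. mzb (\<lambda>m. of_nat (Suc k) * (mzb ^^ k) pone m) m + (mzb ^^ Suc k) pone m)"
    by (simp only: C7 Suc.IH)
  also have "\<dots> = (\<lambda>m. of_nat (Suc k) * mzb ((mzb ^^ k) pone) m + (mzb ^^ Suc k) pone m)"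
    by (simp only: plinD(2)[OF plin_ops2(3)])
  also have "\<dots> = (\<lambda>m. of_nat (Suc (Suc k)) * (mzb ^^ Suc k) pone m)"
    by (simp add: algebra_simps)
  finally show ?case .
qed

lemma dx3_f0: "dx3 (f0 k) = (\<lambda>_. 0)"
  unfolding f0_eq by (simp only: plinD(2)[OF plin_ops(3)] dx3_mzb_pow) simp

lemma dzb_f0: "dzb (f0 (Suc k)) = (\<lambda>m. (1/2) * f0 k m)"
proof -
  have n1: "(of_nat (Suc k)::complex) \<noteq> 0" by (simp only: of_nat_eq_0_iff)
  have n2: "(fact k :: complex) \<noteq> 0" by simp
  have c: "1 / (fact (Suc k) * 2 ^ Suc k) * (of_nat (Suc k) * y) = (1/2) * (1 / (fact k * 2 ^ k) * y)" for y :: complex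
    using n1 n2 by (simp add: fact_Suc field_simps del: of_nat_Suc)
  show ?thesis
    unfolding f0_eq
    apply (simp only: plinD(2)[OF plin_ops2(1)] dzb_mzb_pow c)
    done
qed

lemma Xm_f0: "Xm (f0 (Suc k)) = mx3 (f0 k)"
proof -
  have "Xm (f0 (Suc k)) = (\<lambda>m. 2 * mx3 (dzb (f0 (Suc k))) m - mz (dx3 (f0 (Suc k))) m)"
    by (simp add: Xm_def)
  also have "\<dots> = mx3 (f0 k)"
    by (simp only: dzb_f0 dx3_f0 plinD(2)[OF plin_ops(6)] plin_zero[OF plin_ops2(2)]) simp
  finally show ?thesis .
qed



definition slin :: "(spoly \<Rightarrow> spoly) \<Rightarrow> bool" where
  "slin T \<longleftrightarrow> (\<forall>P Q. T (P + Q) = T P + T Q) \<and> (\<forall>c P. T (csm c P) = csm c (T P))"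

lemma slinD: "slin T \<Longrightarrow> T (P + Q) = T P + T Q" "slin T \<Longrightarrow> T (csm c P) = csm c (T P)"
  unfolding slin_def by blast+

lemma minus_csm: "(P::spoly) - Q = P + csm (-1) Q"
  by (simp add: csm_def fun_eq_iff vec_eq_iff)

lemma csm_zero: "csm c 0 = 0" "csm 0 P = 0"
  by (simp_all add: csm_def fun_eq_iff vec_eq_iff)

lemma slin_diff: assumes "slin T" shows "T (P - Q) = T P - T Q"
  by (simp only: minus_csm slinD(1)[OF assms] slinD(2)[OF assms])

lemma slin_zero: "slin T \<Longrightarrow> T 0 = 0"
  using slinD(2)[of T 0 0] by (simp add: csm_zero)

lemma slin_funpow: "slin T \<Longrightarrow> slin (T ^^ n)"
  by (induction n) (auto simp: slin_def)

lemma slin_lift: "plin T \<Longrightarrow> slin (lift T)"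
  by (simp add: slin_def lift_add lift_csm)

lemma slin_cl: "clin A \<Longrightarrow> slin (cl A)"
  by (simp add: slin_def cl_add cl_csm)

lemma Xt_eq: "Xt e P = lift Xm P + cl (omega e) P"
  by (simp add: Xt_def cl_def fun_eq_iff)

lemma slin_Xt: "slin (Xt e)"
  using slinD[OF slin_lift[OF plin_ops2(4)]] slinD[OF slin_cl[OF clin_omega]]
  by (simp add: slin_def Xt_eq algebra_simps csm_def fun_eq_iff vec_eq_iff)

lemma csm_ring: "csm a (csm b P) = csm (a * b) P" "csm (a + b) P = csm a P + csm b P"
  "csm a (P + Q) = csm a P + csm a Q" "csm 1 P = P"
  by (simp_all add: csm_def fun_eq_iff vec_eq_iff algebra_simps)

lemma cl_cl_omega: "clifford_gens e \<Longrightarrow> cl (omega e) (cl (omega e) P) = 0"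
  by (simp add: cl_def omega_sq fun_eq_iff)

lemma lift_omega: "plin T \<Longrightarrow> lift T (cl (omega e) P) = cl (omega e) (lift T P)"
  by (rule lift_cl[OF _ clin_omega])

lemma lift_id': "lift id P = P" by (simp add: lift_def)

lemma Xt_pow_omega: "(Xt e ^^ n) (cl (omega e) P) = cl (omega e) ((Xt e ^^ n) P)"
proof (induction n)
  case 0 then show ?case by simp
next
  case (Suc n)
  have "(Xt e ^^ Suc n) (cl (omega e) P) = Xt e (cl (omega e) ((Xt e ^^ n) P))"
    by (simp add: Suc)
  also have "\<dots> = cl (omega e) (Xt e ((Xt e ^^ n) P))"
    unfolding Xt_eq[of e "cl (omega e) ((Xt e ^^ n) P)"] Xt_eq[of e "(Xt e ^^ n) P"]
    by (simp add: lift_omega[OF plin_ops2(4)] cl_add[OF clin_omega])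
  finally show ?case by simp
qed

lemma partA:
  assumes "clifford_gens e"
  shows "(Xt e ^^ j) P = lift (Xm ^^ j) P + csm (of_nat j) (lift (Xm ^^ (j - 1)) (cl (omega e) P))"
proof (induction j)
  case 0 then show ?case by (simp add: lift_id lift_id' csm_zero)
next
  case (Suc j)
  have pl: "plin (Xm ^^ n)" for n by (rule plin_funpow[OF plin_ops2(4)])
  have A: "(Xt e ^^ Suc j) P = Xt e (lift (Xm ^^ j) P + csm (of_nat j) (lift (Xm ^^ (j - 1)) (cl (omega e) P)))"
    by (simp only: funpow.simps o_apply Suc.IH)
  have B: "Xt e (lift (Xm ^^ (j - 1)) (cl (omega e) P)) = lift (Xm ^^ j) (cl (omega e) P)" if "j \<ge> 1"
  proof -
    have XS: "(\<lambda>p. Xm ((Xm ^^ (j - 1)) p)) = Xm ^^ j"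
      using that by (cases j) (auto simp: fun_eq_iff)
    have "Xt e (lift (Xm ^^ (j - 1)) (cl (omega e) P))
        = lift Xm (lift (Xm ^^ (j - 1)) (cl (omega e) P)) + cl (omega e) (lift (Xm ^^ (j - 1)) (cl (omega e) P))"
      by (rule Xt_eq)
    also have "lift Xm (lift (Xm ^^ (j - 1)) (cl (omega e) P)) = lift (Xm ^^ j) (cl (omega e) P)"
      by (simp only: lift_lift XS)
    also have "cl (omega e) (lift (Xm ^^ (j - 1)) (cl (omega e) P)) = 0"
      by (simp only: lift_omega[OF pl] cl_cl_omega[OF assms])
    finally show ?thesis by simp
  qed
  have C: "Xt e (lift (Xm ^^ j) P) = lift (Xm ^^ Suc j) P + lift (Xm ^^ j) (cl (omega e) P)"
  proof -
    have XS: "(\<lambda>p. Xm ((Xm ^^ j) p)) = Xm ^^ Suc j" by (simp add: fun_eq_iff)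
    show ?thesis
      unfolding Xt_eq[of e "lift (Xm ^^ j) P"]
      by (simp only: lift_lift XS lift_omega[OF pl])
  qed
  show ?case
  proof (cases "j = 0")
    case True
    then show ?thesis using Xt_eq[of e P] by (simp add: lift_id lift_id' csm_ring)
  next
    case False
    then have j1: "j \<ge> 1" by simp
    show ?thesis
      apply (simp only: A slinD[OF slin_Xt] B[OF j1] C)
      apply (simp add: fun_eq_iff vec_eq_iff csm_def algebra_simps comp_def)
      done
  qed
qed



lemma pv_zero: "pv (\<lambda>_. 0) v = 0" by (simp add: pv_def fun_eq_iff)

lemma pv_csm: "pv (\<lambda>m. c * p m) v = csm c (pv p v)"
  by (simp add: pv_def csm_def fun_eq_iff vec_eq_iff)

lemma F_eq: "j \<le> 2 * k + 1 \<Longrightarrow> F e v k j = (Xt e ^^ j) (F0 k v)"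
  by (simp add: F_def)

lemma plXp: "plin (Xm ^^ n)" by (rule plin_funpow[OF plin_ops2(4)])

lemma partA2:
  assumes "clifford_gens e" "j \<le> 2 * k + 1"
  shows "F e v k j = pv (f k j) v + csm (of_nat j) (pv (f k (j - 1)) (omega e v))"
proof -
  have "F e v k j = lift (Xm ^^ j) (pv (f0 k) v) + csm (of_nat j) (lift (Xm ^^ (j - 1)) (cl (omega e) (pv (f0 k) v)))"
    using F_eq[OF assms(2)] partA[OF assms(1)] by (simp only: F0_def)
  also have "\<dots> = pv ((Xm ^^ j) (f0 k)) v + csm (of_nat j) (pv ((Xm ^^ (j - 1)) (f0 k)) (omega e v))"
    by (simp only: lift_pv[OF plXp] cl_pv[OF clin_omega])
  also have "\<dots> = pv (f k j) v + csm (of_nat j) (pv (f k (j - 1)) (omega e v))"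
    using assms(2) by (simp add: f_eq)
  finally show ?thesis .
qed

lemma F0_vanish:
  assumes "clifford_gens e"
  shows "(Xt e ^^ (2 * k + 2)) (F0 k v) = 0"
proof -
  have "(Xt e ^^ (2 * k + 2)) (F0 k v) = lift (Xm ^^ (2 * k + 2)) (pv (f0 k) v)
      + csm (of_nat (2 * k + 2)) (lift (Xm ^^ (2 * k + 2 - 1)) (cl (omega e) (pv (f0 k) v)))"
    using partA[OF assms(1)] by (simp only: F0_def)
  also have "\<dots> = pv ((Xm ^^ (2 * k + 2)) (f0 k)) v
      + csm (of_nat (2 * k + 2)) (pv ((Xm ^^ (2 * k + 2 - 1)) (f0 k)) (omega e v))"
    by (simp only: lift_pv[OF plXp] cl_pv[OF clin_omega])
  also have "\<dots> = 0"
    using Xm_f0_vanish[of k "2 * k + 2"] Xm_f0_vanish[of k "2 * k + 2 - 1"]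
    by (simp add: pv_zero csm_zero)
  finally show ?thesis .
qed

lemma D_Xt: "lift dx3 (Xt e P) = Xt e (lift dx3 P) + csm 2 (lift dzb P)"
proof -
  have e1: "(\<lambda>p. dx3 (Xm p)) = (\<lambda>p m. Xm (dx3 p) m + 2 * dzb p m)"
    by (rule ext, rule C4)
  have "lift dx3 (Xt e P) = lift dx3 (lift Xm P) + lift dx3 (cl (omega e) P)"
    by (simp only: Xt_eq[of e P] lift_add[OF plin_ops(3)])
  also have "lift dx3 (lift Xm P) = lift Xm (lift dx3 P) + csm 2 (lift dzb P)"
    by (simp only: lift_lift e1 lift_comb)
  also have "lift dx3 (cl (omega e) P) = cl (omega e) (lift dx3 P)"
    by (rule lift_omega[OF plin_ops(3)])
  finally show ?thesis
    unfolding Xt_eq[of e "lift dx3 P"] by (simp add: fun_eq_iff algebra_simps)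
qed

lemma Dz_Xt: "lift dzb (Xt e P) = Xt e (lift dzb P)"
proof -
  have e1: "(\<lambda>p. dzb (Xm p)) = (\<lambda>p. Xm (dzb p))"
    by (rule ext, rule C5)
  show ?thesis
    unfolding Xt_eq[of e P] Xt_eq[of e "lift dzb P"]
    by (simp only: lift_add[OF plin_ops2(1)] lift_lift e1 lift_omega[OF plin_ops2(1)])
qed

lemma Dz_Xt_pow: "lift dzb ((Xt e ^^ n) P) = (Xt e ^^ n) (lift dzb P)"
  by (induction n) (simp_all add: Dz_Xt)

lemma D_Xt_pow: "lift dx3 ((Xt e ^^ Suc j) P)
    = (Xt e ^^ Suc j) (lift dx3 P) + csm (2 * of_nat (Suc j)) ((Xt e ^^ j) (lift dzb P))"
proof (induction j)
  case 0
  show ?case using D_Xt[where e=e and P=P] by (simp add: csm_ring)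
next
  case (Suc j)
  have "lift dx3 ((Xt e ^^ Suc (Suc j)) P) = lift dx3 (Xt e ((Xt e ^^ Suc j) P))"
    by (simp only: funpow.simps o_apply)
  also have "\<dots> = Xt e (lift dx3 ((Xt e ^^ Suc j) P)) + csm 2 (lift dzb ((Xt e ^^ Suc j) P))"
    by (rule D_Xt)
  also have "\<dots> = Xt e ((Xt e ^^ Suc j) (lift dx3 P) + csm (2 * of_nat (Suc j)) ((Xt e ^^ j) (lift dzb P)))
       + csm 2 ((Xt e ^^ Suc j) (lift dzb P))"
    by (simp only: Suc.IH Dz_Xt_pow)
  also have "\<dots> = (Xt e ^^ Suc (Suc j)) (lift dx3 P) + csm (2 * of_nat (Suc j)) ((Xt e ^^ Suc j) (lift dzb P))
       + csm 2 ((Xt e ^^ Suc j) (lift dzb P))"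
    by (simp only: slinD[OF slin_Xt] funpow.simps o_apply)
  also have "\<dots> = (Xt e ^^ Suc (Suc j)) (lift dx3 P) + csm (2 * of_nat (Suc (Suc j))) ((Xt e ^^ Suc j) (lift dzb P))"
    by (simp add: fun_eq_iff vec_eq_iff csm_def algebra_simps)
  finally show ?case .
qed

lemma partB2:
  assumes "clifford_gens e" "k \<ge> 1" "j \<le> 2 * k + 1"
  shows "lift dx3 (F e v k j) = (if 1 \<le> j \<and> j \<le> 2 * k
                                then csm (of_nat j) (F e v (k - 1) (j - 1)) else 0)"
proof -
  obtain k' where k: "k = Suc k'" using assms(2) by (cases k) auto
  have DF0: "lift dx3 (F0 k v) = 0"
    by (simp only: F0_def lift_pv[OF plin_ops(3)] dx3_f0 pv_zero)
  have DzF0: "lift dzb (F0 k v) = csm (1/2) (F0 k' v)"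
    by (simp only: k F0_def lift_pv[OF plin_ops2(1)] dzb_f0 pv_csm)
  show ?thesis
  proof (cases j)
    case 0
    then show ?thesis using DF0 by (simp add: F_eq)
  next
    case (Suc j')
    have "lift dx3 (F e v k j) = (Xt e ^^ j) (lift dx3 (F0 k v))
        + csm (2 * of_nat j) ((Xt e ^^ j') (lift dzb (F0 k v)))"
      using D_Xt_pow[where e=e and j=j' and P="F0 k v"] F_eq[OF assms(3)] Suc by simp
    also have "\<dots> = csm (of_nat j) ((Xt e ^^ j') (F0 k' v))"
      by (simp only: DF0 DzF0 slin_zero[OF slin_funpow[OF slin_Xt]] slinD(2)[OF slin_funpow[OF slin_Xt]])
         (simp add: fun_eq_iff vec_eq_iff csm_def)
    finally have L: "lift dx3 (F e v k j) = csm (of_nat j) ((Xt e ^^ j') (F0 k' v))" .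
    show ?thesis
    proof (cases "j \<le> 2 * k")
      case True
      then have "j' \<le> 2 * k' + 1" using Suc k by simp
      then show ?thesis using L True Suc k by (simp add: F_eq)
    next
      case False
      then have "j' = 2 * k' + 2" using assms(3) Suc k by simp
      then show ?thesis using L False F0_vanish[OF assms(1), where k=k' and v=v] by (simp add: csm_zero)
    qed
  qed
qed

lemma M_Xt: "lift mx3 (Xt e P) = Xt e (lift mx3 P) + lift mz P"
proof -
  have e1: "(\<lambda>p. mx3 (Xm p)) = (\<lambda>p m. Xm (mx3 p) m + mz p m)"
    by (rule ext, rule C8)
  have "lift mx3 (Xt e P) = lift mx3 (lift Xm P) + lift mx3 (cl (omega e) P)"
    by (simp only: Xt_eq[of e P] lift_add[OF plin_ops(6)])
  also have "lift mx3 (lift Xm P) = lift Xm (lift mx3 P) + lift mz P"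
    by (simp only: lift_lift e1 lift_comb1)
  also have "lift mx3 (cl (omega e) P) = cl (omega e) (lift mx3 P)"
    by (rule lift_omega[OF plin_ops(6)])
  finally show ?thesis
    unfolding Xt_eq[of e "lift mx3 P"] by (simp add: fun_eq_iff algebra_simps)
qed

lemma Z_Xt: "lift mz (Xt e P) = Xt e (lift mz P)"
proof -
  have e1: "(\<lambda>p. mz (Xm p)) = (\<lambda>p. Xm (mz p))"
    by (rule ext, rule C1[symmetric])
  show ?thesis
    unfolding Xt_eq[of e P] Xt_eq[of e "lift mz P"]
    by (simp only: lift_add[OF plin_ops2(2)] lift_lift e1 lift_omega[OF plin_ops2(2)])
qed

lemma Z_Xt_pow: "lift mz ((Xt e ^^ n) P) = (Xt e ^^ n) (lift mz P)"
  by (induction n) (simp_all add: Z_Xt)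

lemma M_Xt_pow: "lift mx3 ((Xt e ^^ Suc j) P)
    = (Xt e ^^ Suc j) (lift mx3 P) + csm (of_nat (Suc j)) ((Xt e ^^ j) (lift mz P))"
proof (induction j)
  case 0
  show ?case using M_Xt[where e=e and P=P] by (simp add: csm_ring)
next
  case (Suc j)
  have "lift mx3 ((Xt e ^^ Suc (Suc j)) P) = lift mx3 (Xt e ((Xt e ^^ Suc j) P))"
    by (simp only: funpow.simps o_apply)
  also have "\<dots> = Xt e (lift mx3 ((Xt e ^^ Suc j) P)) + lift mz ((Xt e ^^ Suc j) P)"
    by (rule M_Xt)
  also have "\<dots> = Xt e ((Xt e ^^ Suc j) (lift mx3 P) + csm (of_nat (Suc j)) ((Xt e ^^ j) (lift mz P)))
       + (Xt e ^^ Suc j) (lift mz P)"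
    by (simp only: Suc.IH Z_Xt_pow)
  also have "\<dots> = (Xt e ^^ Suc (Suc j)) (lift mx3 P) + csm (of_nat (Suc j)) ((Xt e ^^ Suc j) (lift mz P))
       + (Xt e ^^ Suc j) (lift mz P)"
    by (simp only: slinD[OF slin_Xt] funpow.simps o_apply)
  also have "\<dots> = (Xt e ^^ Suc (Suc j)) (lift mx3 P) + csm (of_nat (Suc (Suc j))) ((Xt e ^^ Suc j) (lift mz P))"
    by (simp add: fun_eq_iff vec_eq_iff csm_def algebra_simps)
  finally show ?case .
qed

lemma partC2:
  assumes "j \<le> 2 * k + 1"
  shows "F e v (k + 1) (j + 1) = lift mx3 (F e v k j) - csm (of_nat j) (lift mz (F e v k (j - 1)))
                                + cl (omega e) (F e v (k + 1) j)"
proof -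
  define G where "G = F0 (k + 1) v"
  define H where "H = F0 k v"
  have XG: "lift Xm G = lift mx3 H"
    unfolding G_def H_def F0_def
    by (simp only: lift_pv[OF plin_ops2(4)] lift_pv[OF plin_ops(6)] Suc_eq_plus1[symmetric] Xm_f0)
  have L: "F e v (k + 1) (j + 1) = (Xt e ^^ j) (lift mx3 H) + cl (omega e) ((Xt e ^^ j) G)"
  proof -
    have "F e v (k + 1) (j + 1) = (Xt e ^^ j) (Xt e G)"
      using assms unfolding G_def by (simp add: F_eq funpow_Suc_right del: funpow.simps)
    also have "\<dots> = (Xt e ^^ j) (lift mx3 H) + cl (omega e) ((Xt e ^^ j) G)"
      by (simp only: Xt_eq[of e G] XG slinD(1)[OF slin_funpow[OF slin_Xt]] Xt_pow_omega)
    finally show ?thesis .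
  qed
  have R: "lift mx3 ((Xt e ^^ j) H) - csm (of_nat j) (lift mz ((Xt e ^^ (j - 1)) H)) = (Xt e ^^ j) (lift mx3 H)"
  proof (cases j)
    case 0 then show ?thesis by (simp add: csm_zero)
  next
    case (Suc j')
    then show ?thesis using M_Xt_pow[where e=e and j=j' and P=H]
      by (simp add: Z_Xt_pow fun_eq_iff)
  qed
  have "F e v k j = (Xt e ^^ j) H" "F e v k (j - 1) = (Xt e ^^ (j - 1)) H"
    "F e v (k + 1) j = (Xt e ^^ j) G"
    using assms unfolding G_def H_def by (simp_all add: F_eq)
  then show ?thesis using L R by simp
qed

theorem theorem3p2:
  fixes e :: "nat \<Rightarrow> cliff" and v :: spinor
  assumes "clifford_gens e"
    and "v \<noteq> 0"
    and "- \<i> *s ((e 1 ** e 2) *v v) = v"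
  shows
    "(\<forall>j\<ge>1. \<forall>P. is_spoly P \<longrightarrow>
        (Xt e ^^ j) P = (lift Xm ^^ j) P + csm (of_nat j) ((lift Xm ^^ (j - 1)) (cl (omega e) P)))
     \<and> (\<forall>k j. j \<le> 2 * k + 1 \<longrightarrow>
        F e v k j = pv (f k j) v + csm (of_nat j) (pv (f k (j - 1)) (omega e v)))
     \<and> (\<forall>j\<ge>1. \<forall>P. is_spoly P \<longrightarrow>
        lift dx3 ((Xt e ^^ j) P) - (Xt e ^^ j) (lift dx3 P)
          = csm (2 * of_nat j) ((Xt e ^^ (j - 1)) (lift dzb P)))
     \<and> (\<forall>k\<ge>1. \<forall>j. j \<le> 2 * k + 1 \<longrightarrow>
        lift dx3 (F e v k j) = (if 1 \<le> j \<and> j \<le> 2 * k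
                                then csm (of_nat j) (F e v (k - 1) (j - 1)) else 0))
     \<and> (\<forall>j\<ge>1. \<forall>P. is_spoly P \<longrightarrow>
        lift mx3 ((Xt e ^^ j) P) - (Xt e ^^ j) (lift mx3 P)
          = csm (of_nat j) ((Xt e ^^ (j - 1)) (lift mz P)))
     \<and> (\<forall>k j. j \<le> 2 * k + 1 \<longrightarrow>
        F e v (k + 1) (j + 1) = lift mx3 (F e v k j) - csm (of_nat j) (lift mz (F e v k (j - 1)))
                                + cl (omega e) (F e v (k + 1) j))"
proof (intro conjI allI impI)
  fix j :: nat and P assume "j \<ge> 1"
  show "(Xt e ^^ j) P = (lift Xm ^^ j) P + csm (of_nat j) ((lift Xm ^^ (j - 1)) (cl (omega e) P))"
    by (simp only: lift_funpow partA[OF assms(1)])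
next
  fix k j :: nat assume "j \<le> 2 * k + 1"
  then show "F e v k j = pv (f k j) v + csm (of_nat j) (pv (f k (j - 1)) (omega e v))"
    by (rule partA2[OF assms(1)])
next
  fix j :: nat and P assume j: "j \<ge> 1"
  then obtain j' where jj: "j = Suc j'" by (cases j) auto
  show "lift dx3 ((Xt e ^^ j) P) - (Xt e ^^ j) (lift dx3 P)
          = csm (2 * of_nat j) ((Xt e ^^ (j - 1)) (lift dzb P))"
    using D_Xt_pow[where e=e and j=j' and P=P] unfolding jj by (simp add: fun_eq_iff)
next
  fix k j :: nat assume "k \<ge> 1" "j \<le> 2 * k + 1"
  then show "lift dx3 (F e v k j) = (if 1 \<le> j \<and> j \<le> 2 * k
                                then csm (of_nat j) (F e v (k - 1) (j - 1)) else 0)"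
    by (rule partB2[OF assms(1)])
next
  fix j :: nat and P assume j: "j \<ge> 1"
  then obtain j' where jj: "j = Suc j'" by (cases j) auto
  show "lift mx3 ((Xt e ^^ j) P) - (Xt e ^^ j) (lift mx3 P)
          = csm (of_nat j) ((Xt e ^^ (j - 1)) (lift mz P))"
    using M_Xt_pow[where e=e and j=j' and P=P] unfolding jj by (simp add: fun_eq_iff)
next
  fix k j :: nat assume "j \<le> 2 * k + 1"
  then show "F e v (k + 1) (j + 1) = lift mx3 (F e v k j) - csm (of_nat j) (lift mz (F e v k (j - 1)))
                                + cl (omega e) (F e v (k + 1) j)"
    by (rule partC2)
qed


end
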